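(* Let $N\ge 1$, let $\mathbf{a}_1,\dots,\mathbf{a}_N\in\mathbb{R}^3$ and $\mathbf{x}_G\in\mathbb{R}^3$, set $d_i=\|\mathbf{x}_G-\mathbf{a}_i\|$ and $\mathbf{a}_\ast=\frac1N\sum_{i=1}^N\mathbf{a}_i$, and define $$F_{L2}(\mathbf{x},\lambda)=\frac14\sum_{i=1}^N\bigl(\|\mathbf{x}-\mathbf{a}_i\|^2+\lambda^2-d_i^2\bigr)^2,\qquad \mathbf{x}\in\mathbb{R}^3,\ \lambda\in\mathbb{R}.$$ Assume the vectors $\mathbf{a}_1-\mathbf{a}_\ast,\dots,\mathbf{a}_N-\mathbf{a}_\ast$ span $\mathbb{R}^3$. Then $F_{L2}$ has no stationary point $(\mathbf{x},\lambda)$ with $\lambda\neq0$ and $\mathbf{x}\neq\mathbf{x}_G$; more precisely, if $\lambda\ne0$, $\mathbf{x}\ne\mathbf{x}_G$ and $\frac{\partial F_{L2}}{\partial\lambda}(\mathbf{x},\lambda)=0$, then $\nabla_{\mathbf{x}}F_{L2}(\mathbf{x},\lambda)\neq0$. In particular $F_{L2}$ has no local minima with $\lambda\ne0$ and $\mathbf{x}\ne\mathbf{x}_G$.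
   Context: $F_{L2}$ is the squared-range Time of Arrival least-squares objective for exact distances $d_i$ from known base stations $\mathbf{a}_i$ to an object at $\mathbf{x}_G$, augmented with an additional variable $\lambda$. *)

theory Defs
  imports "HOL-Analysis.Analysis"
begin

definition dist_TOA :: "(nat \<Rightarrow> real^3) \<Rightarrow> real^3 \<Rightarrow> nat \<Rightarrow> real" where
  "dist_TOA a xG i = norm (xG - a i)"

definition a_star :: "nat \<Rightarrow> (nat \<Rightarrow> real^3) \<Rightarrow> real^3" where
  "a_star N a = (1 / real N) *\<^sub>R (\<Sum>i=1..N. a i)"

definition F_L2 :: "nat \<Rightarrow> (nat \<Rightarrow> real^3) \<Rightarrow> real^3 \<Rightarrow> real^3 \<Rightarrow> real \<Rightarrow> real" where
  "F_L2 N a xG x l =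
     (1/4) * (\<Sum>i=1..N. ((norm (x - a i))\<^sup>2 + l\<^sup>2 - (dist_TOA a xG i)\<^sup>2)\<^sup>2)"

end

theory Submission
  imports Defs
begin

lemma dl: "(F_L2 N a xG x has_real_derivative
   (\<Sum>i=1..N. ((norm (x - a i))\<^sup>2 + l\<^sup>2 - (dist_TOA a xG i)\<^sup>2) * l)) (at l)"
  unfolding F_L2_def
  apply (rule derivative_eq_intros refl)+
  apply (simp add: sum_distrib_left sum_distrib_right)
  apply (rule sum.cong, auto simp: field_simps)
  done

lemma dx: "((\<lambda>y. F_L2 N a xG y l) has_derivative
   (\<lambda>h. \<Sum>i=1..N. ((norm (x - a i))\<^sup>2 + l\<^sup>2 - (dist_TOA a xG i)\<^sup>2) * ((x - a i) \<bullet> h))) (at x)"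
  unfolding F_L2_def power2_norm_eq_inner
  apply (rule derivative_eq_intros refl)+
  apply (simp add: sum_distrib_left inner_commute algebra_simps)
  done

lemma core:
  fixes N :: nat and a :: "nat \<Rightarrow> real^3" and xG x :: "real^3"
  assumes N: "N \<ge> 1"
    and sp: "span ((\<lambda>i. a i - a_star N a) ` {1..N}) = UNIV"
    and xne: "x \<noteq> xG"
    and s0: "(\<Sum>i=1..N. (norm (x - a i))\<^sup>2 + l\<^sup>2 - (dist_TOA a xG i)\<^sup>2) = 0"
    and d0: "(\<Sum>i=1..N. ((norm (x - a i))\<^sup>2 + l\<^sup>2 - (dist_TOA a xG i)\<^sup>2) * ((x - a i) \<bullet> (x - xG))) = 0"
  shows False
proof -
  define u where "u = x - xG"
  define r where "r i = (norm (x - a i))\<^sup>2 + l\<^sup>2 - (dist_TOA a xG i)\<^sup>2" for i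
  define b where "b i = a i - a_star N a" for i
  define K where "K = u \<bullet> (x + xG) + l\<^sup>2"
  have rK: "r i = K - 2 * (u \<bullet> a i)" for i
    unfolding r_def K_def u_def dist_TOA_def power2_norm_eq_inner
    by (simp add: inner_diff inner_add inner_commute algebra_simps)
  have "(\<Sum>i=1..N. r i) = real N * K - 2 * (u \<bullet> (\<Sum>i=1..N. a i))"
    by (simp add: rK sum_subtractf inner_sum_right sum_distrib_left)
  moreover have "(\<Sum>i=1..N. r i) = 0" using s0 by (simp add: r_def)
  ultimately have "K = 2 * (u \<bullet> a_star N a)"
    using N by (simp add: a_star_def field_simps)
  hence rb: "r i = -2 * (u \<bullet> b i)" for i
    by (simp add: rK b_def inner_diff_right)
  have "(\<Sum>i=1..N. r i * ((x - a i) \<bullet> u)) = 0" using d0 by (simp add: r_def u_def)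
  moreover have "x - a i = (x - a_star N a) - b i" for i by (simp add: b_def)
  ultimately have "(\<Sum>i=1..N. r i * ((x - a_star N a) \<bullet> u) - r i * (b i \<bullet> u)) = 0"
    by (simp add: inner_diff_left algebra_simps)
  hence "(\<Sum>i=1..N. r i) * ((x - a_star N a) \<bullet> u) - (\<Sum>i=1..N. r i * (b i \<bullet> u)) = 0"
    by (simp add: sum_subtractf sum_distrib_right)
  hence "(\<Sum>i=1..N. r i * (b i \<bullet> u)) = 0" using \<open>(\<Sum>i=1..N. r i) = 0\<close> by simp
  hence "(\<Sum>i=1..N. 2 * ((u \<bullet> b i)\<^sup>2)) = 0"
    by (simp add: rb inner_commute power2_eq_square sum_negf mult.assoc)
  hence "(\<Sum>i=1..N. (u \<bullet> b i)\<^sup>2) = 0"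
    by (simp add: sum_distrib_left[symmetric])
  hence z: "\<forall>i\<in>{1..N}. (u \<bullet> b i)\<^sup>2 = 0"
    by (subst sum_nonneg_eq_0_iff[symmetric]) auto
  have "orthogonal u u"
  proof (rule orthogonal_to_span)
    show "u \<in> span (b ` {1..N})" using sp by (simp add: b_def)
    show "\<And>y. y \<in> b ` {1..N} \<Longrightarrow> orthogonal u y" using z by (auto simp: orthogonal_def)
  qed
  hence "u = 0" by (simp add: orthogonal_def)
  thus False using xne by (simp add: u_def)
qed

theorem mainTheorem2:
  fixes N :: nat and a :: "nat \<Rightarrow> real^3" and xG :: "real^3"
  assumes "N \<ge> 1"
    and "span ((\<lambda>i. a i - a_star N a) ` {1..N}) = UNIV"
  shows "(\<forall>x l. l \<noteq> 0 \<and> x \<noteq> xG \<and> (F_L2 N a xG x has_real_derivative 0) (at l)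
            \<longrightarrow> \<not> (((\<lambda>y. F_L2 N a xG y l) has_derivative (\<lambda>h. 0)) (at x)))
       \<and> (\<forall>x l. l \<noteq> 0 \<and> x \<noteq> xG \<longrightarrow>
            \<not> (\<exists>e>0. \<forall>y m. dist (y, m) (x, l) < e \<longrightarrow> F_L2 N a xG x l \<le> F_L2 N a xG y m))"
proof -
  have P: False if l0: "l \<noteq> 0" and xne: "x \<noteq> xG"
    and h1: "(F_L2 N a xG x has_real_derivative 0) (at l)"
    and h2: "((\<lambda>y. F_L2 N a xG y l) has_derivative (\<lambda>h. 0)) (at x)" for x l
  proof -
    have "(\<Sum>i=1..N. ((norm (x - a i))\<^sup>2 + l\<^sup>2 - (dist_TOA a xG i)\<^sup>2) * l) = 0"
      using DERIV_unique[OF dl h1] .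
    hence s0: "(\<Sum>i=1..N. (norm (x - a i))\<^sup>2 + l\<^sup>2 - (dist_TOA a xG i)\<^sup>2) = 0"
      using l0 by (simp add: sum_distrib_right[symmetric])
    have "(\<lambda>h. \<Sum>i=1..N. ((norm (x - a i))\<^sup>2 + l\<^sup>2 - (dist_TOA a xG i)\<^sup>2) * ((x - a i) \<bullet> h)) = (\<lambda>h. 0)"
      using has_derivative_unique[OF dx h2] .
    hence d0: "(\<Sum>i=1..N. ((norm (x - a i))\<^sup>2 + l\<^sup>2 - (dist_TOA a xG i)\<^sup>2) * ((x - a i) \<bullet> (x - xG))) = 0"
      by (rule fun_cong[where x="x - xG", simplified])
    show False using core[OF assms xne s0 d0] .
  qed
  moreover have False if l0: "l \<noteq> 0" and xne: "x \<noteq> xG" and e: "e > 0"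
    and m: "\<forall>y m. dist (y, m) (x, l) < e \<longrightarrow> F_L2 N a xG x l \<le> F_L2 N a xG y m" for x l e
  proof -
    have "(\<Sum>i=1..N. ((norm (x - a i))\<^sup>2 + l\<^sup>2 - (dist_TOA a xG i)\<^sup>2) * l) = 0"
    proof (rule DERIV_local_min[OF dl e])
      show "\<forall>y. \<bar>l - y\<bar> < e \<longrightarrow> F_L2 N a xG x l \<le> F_L2 N a xG x y"
        using m by (auto simp: dist_Pair_Pair dist_real_def abs_minus_commute)
    qed
    hence h1: "(F_L2 N a xG x has_real_derivative 0) (at l)" using dl[of N a xG x l] by (simp only:)
    have "(\<lambda>h. \<Sum>i=1..N. ((norm (x - a i))\<^sup>2 + l\<^sup>2 - (dist_TOA a xG i)\<^sup>2) * ((x - a i) \<bullet> h)) = (\<lambda>h. 0)"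
    proof (rule has_derivative_local_min[OF dx])
      show "eventually (\<lambda>y. F_L2 N a xG x l \<le> F_L2 N a xG y l) (at x)"
      proof -
        have "\<forall>y. dist y x < e \<longrightarrow> F_L2 N a xG x l \<le> F_L2 N a xG y l"
          using m by (simp add: dist_Pair_Pair)
        thus ?thesis unfolding eventually_at using e by blast
      qed
    qed
    hence h2: "((\<lambda>y. F_L2 N a xG y l) has_derivative (\<lambda>h. 0)) (at x)" using dx[of N a xG l x] by (simp only:)
    show False using P[OF l0 xne h1 h2] .
  qed
  ultimately show ?thesis by blast
qed

end
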